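(* Let $V$ be a real Hilbert space, $\mathcal D$ a dictionary, $V_n\subset V$ a subspace of dimension $n$ with orthonormal basis $\Phi=(\phi_1,\dots,\phi_n)$, and $\kappa\in(0,1)$. Let $(W_m)_{m\ge0}$ be generated by the worst case OMP algorithm with parameter $\kappa$. Then for every $\Psi=(\psi_1,\dots,\psi_n)\in V^n$, $$r_m\le4\frac{n^2\|\Psi\|_{\ell^1(\mathcal D)}^2}{\kappa^2}(m+1)^{-1}+n^2\|\Phi-\Psi\|^2\qquad\text{for all }m\ge1,$$ where $\|\Phi-\Psi\|^2=\sum_{i=1}^n\|\phi_i-\psi_i\|^2$.
   Context: A dictionary is a set $\mathcal D\subset V$ of elements with $\|\omega\|=1$ for all $\omega\in\mathcal D$ whose finite linear combinations are dense in $V$. Worst case OMP: $W_0=\{0\}$; for $k\ge1$, take $v_k\in\operatorname{argmax}\{\|v-P_{W_{k-1}}v\|: v\in V_n,\ \|v\|=1\}$, then choose $\omega_k\in\mathcal D$ with $|\langle v_k-P_{W_{k-1}}v_k,\omega_k\rangle|\ge\kappa\sup_{\omega\in\mathcal D}|\langle v_k-P_{W_{k-1}}v_k,\omega\rangle|$, and set $W_k=\operatorname{span}\{\omega_1,\dots,\omega_k\}$ ($P_X$ is the orthogonal projection onto $X$). The residual is $r_m=\sum_{i=1}^n\|\phi_i-P_{W_m}\phi_i\|^2$. For $\Psi\in V^n$, $\|\Psi\|_{\ell^1(\mathcal D)}=\inf\{\sum_{\omega\in\mathcal D}\|c_\omega\|_2:\psi_i=\sum_{\omega\in\mathcal D}c_{\omega,i}\,\omega,\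 i=1,\dots,n\}$ with $c_\omega\in\mathbb R^n$ (countably many nonzero; infimum of the empty set is $+\infty$). *)

theory Defs
  imports "HOL-Analysis.Analysis"
begin

definition oproj :: "'a::real_inner set \<Rightarrow> 'a \<Rightarrow> 'a" where
  "oproj X v = (THE w. w \<in> X \<and> (\<forall>x\<in>X. inner (v - w) x = 0))"

definition dictionary :: "'a::real_normed_vector set \<Rightarrow> bool" where
  "dictionary D \<longleftrightarrow> (\<forall>w\<in>D. norm w = 1) \<and> closure (span D) = UNIV"

definition orthonormal_fam :: "nat \<Rightarrow> (nat \<Rightarrow> 'a::real_inner) \<Rightarrow> bool" where
  "orthonormal_fam n \<phi> \<longleftrightarrow>
     (\<forall>i<n. \<forall>j<n. inner (\<phi> i) (\<phi> j) = (if i = j then 1 else 0))"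

definition Wsp :: "(nat \<Rightarrow> 'a::real_vector) \<Rightarrow> nat \<Rightarrow> 'a set" where
  "Wsp \<omega> k = span (\<omega> ` {1..k})"

definition worst_case_OMP ::
  "'a::real_inner set \<Rightarrow> 'a set \<Rightarrow> real \<Rightarrow> (nat \<Rightarrow> 'a) \<Rightarrow> (nat \<Rightarrow> 'a) \<Rightarrow> bool" where
  "worst_case_OMP D Vn \<kappa> v \<omega> \<longleftrightarrow>
     (\<forall>k\<ge>1.
        v k \<in> Vn \<and> norm (v k) = 1 \<and>
        (\<forall>u\<in>Vn. norm u = 1 \<longrightarrow>
            norm (u - oproj (Wsp \<omega> (k - 1)) u)
              \<le> norm (v k - oproj (Wsp \<omega> (k - 1)) (v k))) \<and>
        \<omega> k \<in> D \<and>
        \<bar>inner (v k - oproj (Wsp \<omega> (k - 1)) (v k)) (\<omega> k)\<bar>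
          \<ge> \<kappa> * (SUP w\<in>D. \<bar>inner (v k - oproj (Wsp \<omega> (k - 1)) (v k)) w\<bar>))"

definition residual :: "nat \<Rightarrow> (nat \<Rightarrow> 'a::real_inner) \<Rightarrow> 'a set \<Rightarrow> real" where
  "residual n \<phi> W = (\<Sum>i<n. (norm (\<phi> i - oproj W (\<phi> i)))\<^sup>2)"

text \<open>Representations with divergent cost contribute +infinity and
  are therefore omitted; the infimum of the empty set is +infinity.\<close>
definition l1_norm :: "'a::real_normed_vector set \<Rightarrow> nat \<Rightarrow> (nat \<Rightarrow> 'a) \<Rightarrow> ereal" where
  "l1_norm D n \<psi> = Inf {ereal (\<Sum>\<^sub>\<infinity>w\<in>D. sqrt (\<Sum>i<n. (c w i)\<^sup>2)) | c.
      countable {w\<in>D. \<exists>i<n. c w i \<noteq> 0} \<and>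
      (\<lambda>w. sqrt (\<Sum>i<n. (c w i)\<^sup>2)) summable_on D \<and>
      (\<forall>i<n. ((\<lambda>w. c w i *\<^sub>R w) has_sum \<psi> i) D)}"

end

theory Submission
  imports Defs
begin

lemma orth_span:
  fixes u :: "'a::real_inner"
  assumes "\<And>x. x\<in>S \<Longrightarrow> inner u x = 0" "y \<in> span S"
  shows "inner u y = 0"
  using assms(2)
proof (induction rule: span_induct)
  case step show ?case using assms(1) by (simp add: step)
qed (auto simp: subspace_def inner_add_right)

lemma oproj_eq:
  fixes v w :: "'a::real_inner"
  assumes "subspace X" "w \<in> X" "\<forall>x\<in>X. inner (v - w) x = 0"
  shows "oproj X v = w"
  unfolding oproj_def
proof (rule the_equality)
  show "w \<in> X \<and> (\<forall>x\<in>X. inner (v - w) x = 0)" using assms by blast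
next
  fix w' assume h: "w' \<in> X \<and> (\<forall>x\<in>X. inner (v - w') x = 0)"
  have d: "w - w' \<in> X" using assms h by (simp add: subspace_diff)
  have "inner (v - w) (w - w') = 0" "inner (v - w') (w - w') = 0" using assms h d by auto
  then have "inner (w - w') (w - w') = 0"
    by (metis (no_types, lifting) diff_diff_eq2 diff_self inner_diff_left diff_diff_cancel eq_iff_diff_eq_0)
  then show "w' = w" by simp
qed

lemma proj_exists:
  fixes S :: "'a::real_inner set"
  assumes "finite S"
  shows "\<exists>w\<in>span S. \<forall>x\<in>span S. inner (v - w) x = 0"
  using assms
proof (induction S arbitrary: v rule: finite_induct)
  case empty then show ?case by auto
next
  case (insert a S)
  obtain w where w: "w \<in> span S" "\<forall>x\<in>span S. inner (v - w) x = 0" using insert.IH by blast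
  obtain p where p: "p \<in> span S" "\<forall>x\<in>span S. inner (a - p) x = 0" using insert.IH by blast
  show ?case
  proof (cases "a - p = 0")
    case True
    then have "a \<in> span S" using p by simp
    then have "span (insert a S) = span S" by (rule span_redundant)
    then show ?thesis using w by auto
  next
    case False
    define t where "t = inner (v - w) (a - p) / (norm (a - p))\<^sup>2"
    have np: "(norm (a - p))\<^sup>2 \<noteq> 0" using False by simp
    have ww: "w + t *\<^sub>R (a - p) \<in> span (insert a S)"
      using w p by (meson span_add span_base span_diff span_mono span_scale insertI1 subset_insertI subsetD)
    have o: "inner (v - (w + t *\<^sub>R (a - p))) y = 0" if "y \<in> insert a S" for y
    proof (cases "y = a")
      case True
      have "inner (v - w) p = 0" "inner (a - p) p = 0" using w p by auto
      then have "inner (v - w) a = inner (v - w) (a - p)" "inner (a - p) a = (norm (a - p))\<^sup>2"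
        by (auto simp: inner_diff_right power2_norm_eq_inner)
      then show ?thesis using True np
        by (simp add: inner_diff_left inner_add_left t_def)
    next
      case False
      then have "y \<in> span S" using that by (simp add: span_base)
      then show ?thesis using w p
        by (simp add: inner_diff_left inner_add_left)
    qed
    have "\<forall>x\<in>span (insert a S). inner (v - (w + t *\<^sub>R (a - p))) x = 0"
      using orth_span[of "insert a S", OF o] by blast
    then show ?thesis using ww by blast
  qed
qed

lemma oproj_props:
  fixes S :: "'a::real_inner set"
  assumes "finite S"
  shows "oproj (span S) v \<in> span S" "\<forall>x\<in>span S. inner (v - oproj (span S) v) x = 0"
proof -
  obtain w where "w \<in> span S" "\<forall>x\<in>span S. inner (v - w) x = 0" using proj_exists[OF assms] by blast
  moreover then have "oproj (span S) v = w" by (intro oproj_eq) auto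
  ultimately show "oproj (span S) v \<in> span S" "\<forall>x\<in>span S. inner (v - oproj (span S) v) x = 0" by auto
qed

lemma oproj_self_inner:
  fixes S :: "'a::real_inner set"
  assumes "finite S"
  shows "inner (v - oproj (span S) v) v = (norm (v - oproj (span S) v))\<^sup>2"
proof -
  have "inner (v - oproj (span S) v) (oproj (span S) v) = 0" using oproj_props[OF assms] by blast
  then show ?thesis by (simp add: power2_norm_eq_inner inner_diff_right)
qed

lemma norm_diff_scale_sq:
  fixes e b :: "'a::real_inner"
  shows "(norm (e - t *\<^sub>R b))\<^sup>2 = (norm e)\<^sup>2 - 2 * t * inner e b + t\<^sup>2 * (norm b)\<^sup>2"
proof -
  have "(norm (e - t *\<^sub>R b))\<^sup>2 = inner (e - t *\<^sub>R b) (e - t *\<^sub>R b)" by (simp add: power2_norm_eq_inner)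
  also have "\<dots> = inner e e - 2 * t * inner e b + t\<^sup>2 * inner b b"
    by (simp add: inner_diff_left inner_diff_right inner_commute power2_eq_square algebra_simps)
  finally show ?thesis by (simp add: power2_norm_eq_inner)
qed

lemma key_step:
  fixes S :: "'a::real_inner set"
  assumes "finite S" "norm a = 1"
  shows "(norm (v - oproj (span (insert a S)) v))\<^sup>2
     \<le> (norm (v - oproj (span S) v))\<^sup>2 - (inner (v - oproj (span S) v) a)\<^sup>2"
proof -
  define w where "w = oproj (span S) v"
  define p where "p = oproj (span S) a"
  have w: "w \<in> span S" "\<forall>x\<in>span S. inner (v - w) x = 0" using oproj_props[OF assms(1)] w_def by auto
  have p: "p \<in> span S" "\<forall>x\<in>span S. inner (a - p) x = 0" using oproj_props[OF assms(1)] p_def by auto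
  have ip: "inner (v - w) p = 0" "inner (a - p) p = 0" using w p by auto
  have ea: "inner (v - w) a = inner (v - w) (a - p)" using ip by (simp add: inner_diff_right)
  show ?thesis
  proof (cases "a - p = 0")
    case True
    then have "a \<in> span S" using p by simp
    moreover have "inner (v - w) a = 0" using ea True by simp
    ultimately show ?thesis using w_def by (simp add: span_redundant)
  next
    case False
    define t where "t = inner (v - w) (a - p) / (norm (a - p))\<^sup>2"
    have np: "(norm (a - p))\<^sup>2 > 0" using False by simp
    have ww: "w + t *\<^sub>R (a - p) \<in> span (insert a S)"
      using w p by (meson span_add span_base span_diff span_mono span_scale insertI1 subset_insertI subsetD)
    have o: "inner (v - (w + t *\<^sub>R (a - p))) y = 0" if "y \<in> insert a S" for y
    proof (cases "y = a")
      case True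
      have "inner (a - p) a = (norm (a - p))\<^sup>2"
        using ip by (auto simp: inner_diff_right power2_norm_eq_inner)
      then show ?thesis using True np ea
        by (simp add: inner_diff_left inner_add_left t_def)
    next
      case False
      then have "y \<in> span S" using that by (simp add: span_base)
      then show ?thesis using w p
        by (simp add: inner_diff_left inner_add_left)
    qed
    have "\<forall>x\<in>span (insert a S). inner (v - (w + t *\<^sub>R (a - p))) x = 0"
      using orth_span[of "insert a S", OF o] by blast
    then have P: "oproj (span (insert a S)) v = w + t *\<^sub>R (a - p)"
      using ww by (intro oproj_eq) auto
    have na: "(norm (a - p))\<^sup>2 \<le> 1"
    proof -
      have "1 = (norm a)\<^sup>2" using assms by simp
      also have "\<dots> = (norm ((a - p) + p))\<^sup>2" by simp
      also have "\<dots> = (norm (a - p))\<^sup>2 + (norm p)\<^sup>2"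
        using ip by (intro norm_add_Pythagorean) (simp add: orthogonal_def)
      finally show ?thesis by (smt (verit) zero_le_power2)
    qed
    define e where "e = v - w"
    define q where "q = inner e (a - p)"
    have "(norm (v - oproj (span (insert a S)) v))\<^sup>2 = (norm (e - t *\<^sub>R (a - p)))\<^sup>2"
      by (simp add: P e_def algebra_simps)
    also have "\<dots> = (norm e)\<^sup>2 - 2 * t * q + t\<^sup>2 * (norm (a - p))\<^sup>2"
      unfolding q_def by (rule norm_diff_scale_sq)
    also have "\<dots> = (norm e)\<^sup>2 - q\<^sup>2 / (norm (a - p))\<^sup>2"
      using np unfolding t_def q_def[symmetric] e_def[symmetric] by (simp add: field_simps power2_eq_square)
    also have "\<dots> \<le> (norm e)\<^sup>2 - q\<^sup>2"
    proof -
      have "q\<^sup>2 \<le> q\<^sup>2 / (norm (a - p))\<^sup>2" using np na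
        by (simp add: le_divide_eq mult_left_le)
      then show ?thesis by simp
    qed
    finally show ?thesis using ea by (simp add: e_def q_def w_def)
  qed
qed


lemma onb_expand:
  fixes \<phi> :: "nat \<Rightarrow> 'a::real_inner"
  assumes "orthonormal_fam n \<phi>" "x \<in> span (\<phi> ` {..<n})"
  shows "x = (\<Sum>i<n. inner x (\<phi> i) *\<^sub>R \<phi> i)"
  using assms(2)
proof (induction rule: span_induct)
  case (step y)
  then obtain j where j: "j < n" "y = \<phi> j" by auto
  have "(\<Sum>i<n. inner (\<phi> j) (\<phi> i) *\<^sub>R \<phi> i) = (\<Sum>i<n. (if i = j then \<phi> i else 0))"
    using assms(1) j(1) unfolding orthonormal_fam_def
    by (intro sum.cong) (auto simp: inner_commute)
  also have "\<dots> = \<phi> j" using j(1) by (simp add: sum.delta)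
  finally show ?case using j by simp
next
  show "subspace {x. x = (\<Sum>i<n. inner x (\<phi> i) *\<^sub>R \<phi> i)}"
    unfolding subspace_def
  proof (intro conjI allI impI ballI)
    fix c :: real and x assume "x \<in> {x. x = (\<Sum>i<n. inner x (\<phi> i) *\<^sub>R \<phi> i)}"
    then have hx: "x = (\<Sum>i<n. inner x (\<phi> i) *\<^sub>R \<phi> i)" by simp
    have "c *\<^sub>R x = c *\<^sub>R (\<Sum>i<n. inner x (\<phi> i) *\<^sub>R \<phi> i)" using hx by metis
    also have "\<dots> = (\<Sum>i<n. inner (c *\<^sub>R x) (\<phi> i) *\<^sub>R \<phi> i)" by (simp add: scaleR_sum_right)
    finally show "c *\<^sub>R x \<in> {x. x = (\<Sum>i<n. inner x (\<phi> i) *\<^sub>R \<phi> i)}" by (simp only: mem_Collect_eq)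
  qed (auto simp: inner_add_left scaleR_add_left sum.distrib)
qed

lemma onb_norm:
  fixes \<phi> :: "nat \<Rightarrow> 'a::real_inner"
  assumes "orthonormal_fam n \<phi>"
  shows "(norm (\<Sum>i<n. a i *\<^sub>R \<phi> i))\<^sup>2 = (\<Sum>i<n. (a i)\<^sup>2)"
proof -
  have "(norm (\<Sum>i<n. a i *\<^sub>R \<phi> i))\<^sup>2 = (\<Sum>i<n. \<Sum>j<n. a i * (a j * inner (\<phi> j) (\<phi> i)))"
    unfolding power2_norm_eq_inner inner_sum_left inner_sum_right inner_scaleR_left inner_scaleR_right
    by (simp add: sum_distrib_left)
  also have "\<dots> = (\<Sum>i<n. \<Sum>j<n. if j = i then a i * a i else 0)"
    using assms unfolding orthonormal_fam_def by (intro sum.cong refl) auto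
  also have "\<dots> = (\<Sum>i<n. (a i)\<^sup>2)" by (simp add: sum.delta power2_eq_square)
  finally show ?thesis .
qed

lemma onb_coef:
  fixes \<phi> :: "nat \<Rightarrow> 'a::real_inner"
  assumes "orthonormal_fam n \<phi>" "x \<in> span (\<phi> ` {..<n})"
  shows "(\<Sum>i<n. (inner x (\<phi> i))\<^sup>2) = (norm x)\<^sup>2"
  using onb_norm[OF assms(1), of "\<lambda>i. inner x (\<phi> i)"] onb_expand[OF assms] by simp

lemma proj_lin:
  fixes S :: "'a::real_inner set"
  assumes "finite S"
  shows "(\<Sum>i\<in>I. a i *\<^sub>R x i) - oproj (span S) (\<Sum>i\<in>I. a i *\<^sub>R x i)
     = (\<Sum>i\<in>I. a i *\<^sub>R (x i - oproj (span S) (x i)))"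
proof -
  have "oproj (span S) (\<Sum>i\<in>I. a i *\<^sub>R x i) = (\<Sum>i\<in>I. a i *\<^sub>R oproj (span S) (x i))"
  proof (rule oproj_eq)
    show "subspace (span S)" by simp
    show "(\<Sum>i\<in>I. a i *\<^sub>R oproj (span S) (x i)) \<in> span S"
      using oproj_props(1)[OF assms] by (intro span_sum span_scale) auto
    show "\<forall>y\<in>span S. inner ((\<Sum>i\<in>I. a i *\<^sub>R x i) - (\<Sum>i\<in>I. a i *\<^sub>R oproj (span S) (x i))) y = 0"
    proof
      fix y assume y: "y \<in> span S"
      have "inner ((\<Sum>i\<in>I. a i *\<^sub>R x i) - (\<Sum>i\<in>I. a i *\<^sub>R oproj (span S) (x i))) y
          = (\<Sum>i\<in>I. a i * inner (x i - oproj (span S) (x i)) y)"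
        by (simp add: inner_diff_left inner_sum_left sum_subtractf algebra_simps)
      also have "\<dots> = 0" using oproj_props(2)[OF assms] y by simp
      finally show "inner ((\<Sum>i\<in>I. a i *\<^sub>R x i) - (\<Sum>i\<in>I. a i *\<^sub>R oproj (span S) (x i))) y = 0" .
    qed
  qed
  then show ?thesis by (simp add: sum_subtractf scaleR_diff_right)
qed

lemma has_sum_finsum:
  fixes f :: "'i \<Rightarrow> 'b \<Rightarrow> real"
  assumes "finite I" "\<And>i. i \<in> I \<Longrightarrow> (f i has_sum s i) A"
  shows "((\<lambda>x. \<Sum>i\<in>I. f i x) has_sum (\<Sum>i\<in>I. s i)) A"
  using assms
proof (induction I rule: finite_induct)
  case empty then show ?case by simp
next
  case (insert j I)
  then show ?case by (simp add: has_sum_add)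
qed

lemma seq_bound:
  fixes b :: "nat \<Rightarrow> real"
  assumes B: "B \<ge> 0" and mono: "\<And>k. b (Suc k) \<le> b k"
    and dec: "\<And>k. b k > 0 \<Longrightarrow> (b k)\<^sup>2 \<le> B * (b k - b (Suc k))"
    and m: "m \<ge> 1"
  shows "b m \<le> B / (real m + 1)"
  using m
proof (induction m rule: dec_induct)
  case base
  have nn: "B / (real 1 + 1) \<ge> 0" using B by simp
  show ?case
  proof (cases "b 1 > 0")
    case False then show ?thesis using nn by linarith
  next
    case True
    have b0: "b 0 > 0" using True mono[of 0] by simp
    have d0: "(b 0)\<^sup>2 \<le> B * (b 0 - b 1)" using dec[OF b0] by simp
    have Bp: "B > 0"
    proof (rule ccontr)
      assume "\<not> B > 0" then have "B = 0" using B by simp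
      then show False using d0 b0 by simp
    qed
    have "B * b 1 \<le> B * b 0 - (b 0)\<^sup>2" using d0 by (simp add: algebra_simps)
    also have "\<dots> \<le> B * (B / 4)"
    proof -
      have "(B - 2 * b 0)\<^sup>2 \<ge> 0" by simp
      then show ?thesis by (simp add: power2_eq_square algebra_simps)
    qed
    finally have "b 1 \<le> B / 4" using Bp by (rule mult_left_le_imp_le)
    then show ?thesis using True by simp
  qed
next
  case (step m)
  have nn: "B / (real (Suc m) + 1) \<ge> 0" using B by simp
  show ?case
  proof (cases "b (Suc m) > 0")
    case False then show ?thesis using nn by linarith
  next
    case True
    define x where "x = b m"
    define y where "y = b (Suc m)"
    define c where "c = B / (real m + 1)"
    have y0: "y > 0" using True y_def by simp
    have xy: "y \<le> x" using mono x_def y_def by simp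
    have x0: "x > 0" using xy y0 by simp
    have d: "x\<^sup>2 \<le> B * (x - y)" using dec[OF x0[unfolded x_def]] x_def y_def by simp
    have Bp: "B > 0"
    proof (rule ccontr)
      assume "\<not> B > 0" then have "B = 0" using B by simp
      then show False using d x0 by simp
    qed
    have xc: "x \<le> c" using step.IH x_def c_def by simp
    have m1: "real m + 1 \<ge> 2" using step.hyps by simp
    have "c \<le> B / 2" unfolding c_def using Bp m1 by (intro divide_left_mono) auto
    then have c2: "c + x \<le> B" using xc by simp
    have "B * y \<le> B * x - x\<^sup>2" using d by (simp add: algebra_simps)
    also have "\<dots> \<le> B * c - c\<^sup>2"
    proof -
      have "(B * c - c\<^sup>2) - (B * x - x\<^sup>2) = (c - x) * (B - (c + x))" by (simp add: algebra_simps power2_eq_square)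
      also have "\<dots> \<ge> 0" using xc c2 by (intro mult_nonneg_nonneg) auto
      finally show ?thesis by simp
    qed
    also have "B * c - c\<^sup>2 = B * (B * real m / (real m + 1)\<^sup>2)"
    proof -
      have p: "real m + 1 \<noteq> 0" by simp
      have "B * c - c\<^sup>2 = B * (B * ((real m + 1) - 1) / (real m + 1)\<^sup>2)"
        unfolding c_def using p by (simp add: divide_simps power2_eq_square) (simp add: algebra_simps)
      then show ?thesis by simp
    qed
    finally have "y \<le> B * real m / (real m + 1)\<^sup>2" using Bp by (rule mult_left_le_imp_le)
    also have "\<dots> \<le> B / (real (Suc m) + 1)"
    proof -
      have "real m * (real m + 2) \<le> (real m + 1)\<^sup>2" by (simp add: power2_eq_square algebra_simps)
      then have "real m / (real m + 1)\<^sup>2 \<le> 1 / (real m + 2)"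
        by (simp add: divide_simps)
      then have "B * (real m / (real m + 1)\<^sup>2) \<le> B * (1 / (real m + 2))" using Bp by (intro mult_left_mono) auto
      then show ?thesis by (simp add: add.commute)
    qed
    finally show ?thesis using y_def by simp
  qed
qed

lemma step_ineq:
  fixes D :: "'a::real_inner set" and \<phi> \<psi> v \<omega> :: "nat \<Rightarrow> 'a" and c :: "'a \<Rightarrow> nat \<Rightarrow> real"
  assumes D1: "\<forall>w\<in>D. norm w = 1" and orth: "orthonormal_fam n \<phi>" and kp: "0 < \<kappa>"
    and omp: "worst_case_OMP D (span (\<phi> ` {..<n})) \<kappa> v \<omega>"
    and cost: "((\<lambda>w. sqrt (\<Sum>i<n. (c w i)\<^sup>2)) has_sum L) D"
    and rep: "\<forall>i<n. ((\<lambda>w. c w i *\<^sub>R w) has_sum \<psi> i) D"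
  shows "residual n \<phi> (Wsp \<omega> (Suc k)) \<le> residual n \<phi> (Wsp \<omega> k)"
    and "residual n \<phi> (Wsp \<omega> k) - real n * (\<Sum>i<n. (norm (\<phi> i - \<psi> i))\<^sup>2) > 0 \<Longrightarrow>
         \<kappa>\<^sup>2 * (residual n \<phi> (Wsp \<omega> k) - real n * (\<Sum>i<n. (norm (\<phi> i - \<psi> i))\<^sup>2))\<^sup>2
         \<le> 4 * (real n)\<^sup>2 * L\<^sup>2 * (residual n \<phi> (Wsp \<omega> k) - residual n \<phi> (Wsp \<omega> (Suc k)))"
proof -
  define S0 where "S0 = \<omega> ` {1..k}"
  have fin: "finite S0" unfolding S0_def by simp
  have Wk: "Wsp \<omega> k = span S0" unfolding S0_def Wsp_def by simp
  have WSk: "Wsp \<omega> (Suc k) = span (insert (\<omega> (Suc k)) S0)"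
    unfolding S0_def Wsp_def by (simp add: atLeastAtMostSuc_conv)
  define P where "P x = oproj (span S0) x" for x
  define Vn where "Vn = span (\<phi> ` {..<n})"
  define vk where "vk = v (Suc k)"
  define wk where "wk = \<omega> (Suc k)"
  define e where "e = vk - P vk"
  define \<sigma> where "\<sigma> = norm e"
  define S where "S = (SUP w\<in>D. \<bar>inner e w\<bar>)"
  define a where "a i = inner vk (\<phi> i)" for i
  define d where "d i = \<phi> i - P (\<phi> i)" for i
  define \<epsilon>2 where "\<epsilon>2 = (\<Sum>i<n. (norm (\<phi> i - \<psi> i))\<^sup>2)"
  define r where "r j = residual n \<phi> (Wsp \<omega> j)" for j
  have o: "vk \<in> Vn" "norm vk = 1" "\<forall>u\<in>Vn. norm u = 1 \<longrightarrow> norm (u - P u) \<le> norm e"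
     "wk \<in> D" "\<bar>inner e wk\<bar> \<ge> \<kappa> * S"
    using omp[unfolded worst_case_OMP_def, rule_format, of "Suc k"]
    unfolding vk_def wk_def e_def P_def S_def Vn_def Wk[symmetric] by auto
  have nwk: "norm wk = 1" using D1 o(4) by auto
  have vk_exp: "vk = (\<Sum>i<n. a i *\<^sub>R \<phi> i)" using onb_expand[OF orth] o(1) unfolding a_def Vn_def by blast
  have asum: "(\<Sum>i<n. (a i)\<^sup>2) = 1" using onb_coef[OF orth] o(1,2) unfolding a_def Vn_def by simp
  have e_exp: "e = (\<Sum>i<n. a i *\<^sub>R d i)"
    unfolding e_def d_def P_def using proj_lin[OF fin, of a \<phi> "{..<n}"] vk_exp by simp
  have rk: "r k = (\<Sum>i<n. (norm (d i))\<^sup>2)" unfolding r_def residual_def d_def P_def Wk by simp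
  have C1: "r (Suc k) \<le> (\<Sum>i<n. (norm (d i))\<^sup>2 - (inner (d i) wk)\<^sup>2)"
    unfolding r_def residual_def WSk
    by (intro sum_mono) (unfold d_def P_def wk_def, rule key_step[OF fin nwk[unfolded wk_def]])
  have CS: "(inner e wk)\<^sup>2 \<le> (\<Sum>i<n. (inner (d i) wk)\<^sup>2)"
  proof -
    have "inner e wk = (\<Sum>i<n. a i * inner (d i) wk)" unfolding e_exp by (simp add: inner_sum_left)
    then have "(inner e wk)\<^sup>2 \<le> (\<Sum>i<n. (a i)\<^sup>2) * (\<Sum>i<n. (inner (d i) wk)\<^sup>2)"
      using Cauchy_Schwarz_ineq_sum by metis
    then show ?thesis using asum by simp
  qed
  have R1: "r (Suc k) \<le> r k - (inner e wk)\<^sup>2"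
    using C1 CS rk by (simp add: sum_subtractf)
  then show "residual n \<phi> (Wsp \<omega> (Suc k)) \<le> residual n \<phi> (Wsp \<omega> k)"
    unfolding r_def by (smt (verit) zero_le_power2)
  have C2: "r k \<le> real n * \<sigma>\<^sup>2"
  proof -
    have "(norm (d i))\<^sup>2 \<le> \<sigma>\<^sup>2" if "i \<in> {..<n}" for i
    proof -
      have "\<phi> i \<in> Vn" unfolding Vn_def using that by (intro span_base) auto
      moreover have "norm (\<phi> i) = 1" using orth that unfolding orthonormal_fam_def
        by (simp add: norm_eq_sqrt_inner)
      ultimately have "norm (d i) \<le> \<sigma>" using o(3) unfolding d_def \<sigma>_def by auto
      then show ?thesis by (simp add: power_mono)
    qed
    then have "(\<Sum>i<n. (norm (d i))\<^sup>2) \<le> (\<Sum>i<n. \<sigma>\<^sup>2)" by (rule sum_mono)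
    then show ?thesis using rk by simp
  qed
  have bddS: "bdd_above ((\<lambda>w. \<bar>inner e w\<bar>) ` D)"
  proof (rule bdd_aboveI2)
    fix w assume "w \<in> D"
    then show "\<bar>inner e w\<bar> \<le> \<sigma>" unfolding \<sigma>_def using D1 Cauchy_Schwarz_ineq2[of e w] by auto
  qed
  have Sup: "\<bar>inner e w\<bar> \<le> S" if "w \<in> D" for w
    unfolding S_def using bddS that by (rule cSUP_upper2) simp
  have S0: "0 \<le> S" using Sup[OF o(4)] by simp
  have L0: "0 \<le> L" using has_sum_mono[OF has_sum_0[of D "\<lambda>_. 0::real"] cost] by (simp add: sum_nonneg)
  have sig: "\<sigma>\<^sup>2 = inner e vk" unfolding \<sigma>_def e_def P_def using oproj_self_inner[OF fin] by simp
  define T1 where "T1 = (\<Sum>i<n. a i * inner e (\<psi> i))"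
  define T2 where "T2 = (\<Sum>i<n. a i * inner e (\<phi> i - \<psi> i))"
  have split: "inner e vk = T1 + T2"
    unfolding T1_def T2_def vk_exp by (simp add: inner_sum_right inner_diff_right sum.distrib[symmetric] algebra_simps)
  have T1: "T1 \<le> S * L"
  proof -
    define g where "g w = (\<Sum>i<n. a i * (c w i * inner e w))" for w
    have "((\<lambda>w. inner e (c w i *\<^sub>R w)) has_sum inner e (\<psi> i)) D" if "i \<in> {..<n}" for i
    proof -
      have "((\<lambda>w. c w i *\<^sub>R w) has_sum \<psi> i) D" using rep that by auto
      then show ?thesis by (rule has_sum_bounded_linear[OF bounded_linear_inner_right])
    qed
    then have "((\<lambda>w. a i * (c w i * inner e w)) has_sum a i * inner e (\<psi> i)) D" if "i \<in> {..<n}" for i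
      using that by (intro has_sum_cmult_right) simp
    then have hg: "(g has_sum T1) D" unfolding g_def T1_def by (intro has_sum_finsum) auto
    have hs: "((\<lambda>w. S * sqrt (\<Sum>i<n. (c w i)\<^sup>2)) has_sum S * L) D"
      using cost by (rule has_sum_cmult_right)
    have "g w \<le> S * sqrt (\<Sum>i<n. (c w i)\<^sup>2)" if w: "w \<in> D" for w
    proof -
      have ge: "g w = (\<Sum>i<n. a i * c w i) * inner e w" unfolding g_def by (simp add: sum_distrib_right mult.assoc)
      have "(\<Sum>i<n. a i * c w i)\<^sup>2 \<le> (\<Sum>i<n. (a i)\<^sup>2) * (\<Sum>i<n. (c w i)\<^sup>2)" by (rule Cauchy_Schwarz_ineq_sum)
      then have "(\<Sum>i<n. a i * c w i)\<^sup>2 \<le> (\<Sum>i<n. (c w i)\<^sup>2)" using asum by simp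
      then have A: "\<bar>\<Sum>i<n. a i * c w i\<bar> \<le> sqrt (\<Sum>i<n. (c w i)\<^sup>2)"
        using real_sqrt_le_mono real_sqrt_abs by metis
      have "g w \<le> \<bar>\<Sum>i<n. a i * c w i\<bar> * \<bar>inner e w\<bar>" unfolding ge by (metis abs_ge_self abs_mult)
      also have "\<dots> \<le> sqrt (\<Sum>i<n. (c w i)\<^sup>2) * S" using A Sup[OF w] by (intro mult_mono) (auto simp: sum_nonneg)
      finally show ?thesis by (simp add: mult.commute)
    qed
    then show ?thesis using has_sum_mono[OF hg hs] by blast
  qed
  have T2: "T2 \<le> (\<sigma>\<^sup>2 + \<epsilon>2) / 2"
  proof -
    have "T2\<^sup>2 \<le> (\<Sum>i<n. (a i)\<^sup>2) * (\<Sum>i<n. (inner e (\<phi> i - \<psi> i))\<^sup>2)"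
      unfolding T2_def by (rule Cauchy_Schwarz_ineq_sum)
    also have "\<dots> = (\<Sum>i<n. (inner e (\<phi> i - \<psi> i))\<^sup>2)" using asum by simp
    also have "\<dots> \<le> (\<Sum>i<n. \<sigma>\<^sup>2 * (norm (\<phi> i - \<psi> i))\<^sup>2)"
    proof (rule sum_mono)
      fix i
      have "\<bar>inner e (\<phi> i - \<psi> i)\<bar> \<le> \<sigma> * norm (\<phi> i - \<psi> i)"
        unfolding \<sigma>_def by (rule Cauchy_Schwarz_ineq2)
      then have "\<bar>inner e (\<phi> i - \<psi> i)\<bar>\<^sup>2 \<le> (\<sigma> * norm (\<phi> i - \<psi> i))\<^sup>2" by (intro power_mono) auto
      then show "(inner e (\<phi> i - \<psi> i))\<^sup>2 \<le> \<sigma>\<^sup>2 * (norm (\<phi> i - \<psi> i))\<^sup>2" by (simp add: power_mult_distrib)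
    qed
    also have "\<dots> = \<sigma>\<^sup>2 * \<epsilon>2" unfolding \<epsilon>2_def by (simp add: sum_distrib_left)
    also have "\<dots> \<le> ((\<sigma>\<^sup>2 + \<epsilon>2) / 2)\<^sup>2"
    proof -
      have "((\<sigma>\<^sup>2 + \<epsilon>2) / 2)\<^sup>2 - \<sigma>\<^sup>2 * \<epsilon>2 = ((\<sigma>\<^sup>2 - \<epsilon>2) / 2)\<^sup>2" by (simp add: power2_eq_square field_simps)
      then show ?thesis by (smt (verit) zero_le_power2)
    qed
    finally have "T2\<^sup>2 \<le> ((\<sigma>\<^sup>2 + \<epsilon>2) / 2)\<^sup>2" .
    moreover have "0 \<le> (\<sigma>\<^sup>2 + \<epsilon>2) / 2" unfolding \<epsilon>2_def by (intro divide_nonneg_nonneg add_nonneg_nonneg sum_nonneg) auto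
    ultimately show ?thesis by (rule power2_le_imp_le)
  qed
  have key: "\<sigma>\<^sup>2 - \<epsilon>2 \<le> 2 * (S * L)" using sig split T1 T2 by argo
  assume pos: "residual n \<phi> (Wsp \<omega> k) - real n * (\<Sum>i<n. (norm (\<phi> i - \<psi> i))\<^sup>2) > 0"
  define b where "b = r k - real n * \<epsilon>2"
  have b0: "b > 0" using pos unfolding b_def r_def \<epsilon>2_def by simp
  have "b \<le> real n * (\<sigma>\<^sup>2 - \<epsilon>2)" unfolding b_def using C2 by (simp add: algebra_simps)
  also have "\<dots> \<le> real n * (2 * (S * L))" using key by (intro mult_left_mono) auto
  finally have "b \<le> 2 * real n * S * L" by simp
  then have "b\<^sup>2 \<le> (2 * real n * S * L)\<^sup>2" using b0 by (intro power_mono) auto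
  then have "\<kappa>\<^sup>2 * b\<^sup>2 \<le> \<kappa>\<^sup>2 * (2 * real n * S * L)\<^sup>2" by (intro mult_left_mono) auto
  also have "\<dots> = 4 * (real n)\<^sup>2 * L\<^sup>2 * (\<kappa> * S)\<^sup>2" by (simp add: power_mult_distrib)
  also have "\<dots> \<le> 4 * (real n)\<^sup>2 * L\<^sup>2 * (inner e wk)\<^sup>2"
  proof -
    have "(\<kappa> * S)\<^sup>2 \<le> \<bar>inner e wk\<bar>\<^sup>2" using o(5) kp S0 by (intro power_mono) auto
    then show ?thesis by (intro mult_left_mono) auto
  qed
  also have "\<dots> \<le> 4 * (real n)\<^sup>2 * L\<^sup>2 * (r k - r (Suc k))"
    using R1 by (intro mult_left_mono) auto
  finally show "\<kappa>\<^sup>2 * (residual n \<phi> (Wsp \<omega> k) - real n * (\<Sum>i<n. (norm (\<phi> i - \<psi> i))\<^sup>2))\<^sup>2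
         \<le> 4 * (real n)\<^sup>2 * L\<^sup>2 * (residual n \<phi> (Wsp \<omega> k) - residual n \<phi> (Wsp \<omega> (Suc k)))"
    unfolding b_def r_def \<epsilon>2_def .
qed


lemma real_bound:
  fixes D :: "'a::real_inner set" and \<phi> \<psi> v \<omega> :: "nat \<Rightarrow> 'a" and c :: "'a \<Rightarrow> nat \<Rightarrow> real"
  assumes D1: "\<forall>w\<in>D. norm w = 1" and orth: "orthonormal_fam n \<phi>" and kp: "0 < \<kappa>"
    and omp: "worst_case_OMP D (span (\<phi> ` {..<n})) \<kappa> v \<omega>"
    and cost: "((\<lambda>w. sqrt (\<Sum>i<n. (c w i)\<^sup>2)) has_sum L) D"
    and rep: "\<forall>i<n. ((\<lambda>w. c w i *\<^sub>R w) has_sum \<psi> i) D"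
    and m: "m \<ge> 1"
  shows "residual n \<phi> (Wsp \<omega> m) \<le> 4 * (real n)\<^sup>2 * L\<^sup>2 / \<kappa>\<^sup>2 / (real m + 1)
           + (real n)\<^sup>2 * (\<Sum>i<n. (norm (\<phi> i - \<psi> i))\<^sup>2)"
proof -
  define E where "E = (\<Sum>i<n. (norm (\<phi> i - \<psi> i))\<^sup>2)"
  define b where "b k = residual n \<phi> (Wsp \<omega> k) - real n * E" for k
  define B where "B = 4 * (real n)\<^sup>2 * L\<^sup>2 / \<kappa>\<^sup>2"
  note st = step_ineq[OF D1 orth kp omp cost rep]
  have "b m \<le> B / (real m + 1)"
  proof (rule seq_bound)
    show "0 \<le> B" unfolding B_def by simp
    show "b (Suc k) \<le> b k" for k unfolding b_def using st(1)[of k] by simp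
    show "(b k)\<^sup>2 \<le> B * (b k - b (Suc k))" if "b k > 0" for k
    proof -
      have "\<kappa>\<^sup>2 * (b k)\<^sup>2 \<le> 4 * (real n)\<^sup>2 * L\<^sup>2 * (b k - b (Suc k))"
        using st(2)[of k] that unfolding b_def E_def by simp
      then show ?thesis unfolding B_def using kp by (simp add: field_simps)
    qed
  qed (rule m)
  moreover have "real n * E \<le> (real n)\<^sup>2 * E"
  proof -
    have "E \<ge> 0" unfolding E_def by (simp add: sum_nonneg)
    moreover have "real n \<le> (real n)\<^sup>2" by (cases n) (auto simp: power2_eq_square)
    ultimately show ?thesis by (intro mult_right_mono) auto
  qed
  ultimately show ?thesis unfolding b_def B_def E_def by simp
qed

theorem theorem4:
  fixes D :: "'a::{real_inner, complete_space} set"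
    and \<phi> \<psi> v \<omega> :: "nat \<Rightarrow> 'a"
    and n :: nat and \<kappa> :: real
  assumes "dictionary D"
    and "orthonormal_fam n \<phi>"
    and "0 < \<kappa>" and "\<kappa> < 1"
    and "worst_case_OMP D (span (\<phi> ` {..<n})) \<kappa> v \<omega>"
  shows "\<forall>m\<ge>1. ereal (residual n \<phi> (Wsp \<omega> m))
           \<le> 4 * ereal (real n ^ 2) * (l1_norm D n \<psi>)\<^sup>2 / ereal (\<kappa>\<^sup>2) / ereal (real m + 1)
             + ereal (real n ^ 2 * (\<Sum>i<n. (norm (\<phi> i - \<psi> i))\<^sup>2))"
proof (intro allI impI)
  fix m :: nat assume m: "m \<ge> 1"
  have D1: "\<forall>w\<in>D. norm w = 1" using assms(1) unfolding dictionary_def by simp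
  define R where "R = residual n \<phi> (Wsp \<omega> m)"
  define E where "E = (\<Sum>i<n. (norm (\<phi> i - \<psi> i))\<^sup>2)"
  define C where "C = {ereal (\<Sum>\<^sub>\<infinity>w\<in>D. sqrt (\<Sum>i<n. (c w i)\<^sup>2)) | c.
      countable {w\<in>D. \<exists>i<n. c w i \<noteq> 0} \<and>
      (\<lambda>w. sqrt (\<Sum>i<n. (c w i)\<^sup>2)) summable_on D \<and>
      (\<forall>i<n. ((\<lambda>w. c w i *\<^sub>R w) has_sum \<psi> i) D)}"
  have l1: "l1_norm D n \<psi> = Inf C" unfolding l1_norm_def C_def by simp
  have Cb: "\<exists>L. x = ereal L \<and> L \<ge> 0 \<and> R \<le> 4 * (real n)\<^sup>2 * L\<^sup>2 / \<kappa>\<^sup>2 / (real m + 1) + (real n)\<^sup>2 * E"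
    if "x \<in> C" for x
  proof -
    obtain c where c: "x = ereal (\<Sum>\<^sub>\<infinity>w\<in>D. sqrt (\<Sum>i<n. (c w i)\<^sup>2))"
      "(\<lambda>w. sqrt (\<Sum>i<n. (c w i)\<^sup>2)) summable_on D"
      "\<forall>i<n. ((\<lambda>w. c w i *\<^sub>R w) has_sum \<psi> i) D"
      using \<open>x \<in> C\<close> unfolding C_def by blast
    have hs: "((\<lambda>w. sqrt (\<Sum>i<n. (c w i)\<^sup>2)) has_sum (\<Sum>\<^sub>\<infinity>w\<in>D. sqrt (\<Sum>i<n. (c w i)\<^sup>2))) D"
      using c(2) by (rule has_sum_infsum)
    show ?thesis
      apply (rule exI[of _ "\<Sum>\<^sub>\<infinity>w\<in>D. sqrt (\<Sum>i<n. (c w i)\<^sup>2)"])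
      using c(1) real_bound[OF D1 assms(2,3,5) hs c(3) m] unfolding R_def E_def
      by (auto intro!: infsum_nonneg simp: sum_nonneg)
  qed
  have l0: "0 \<le> Inf C" using Cb by (intro Inf_greatest) force
  show "ereal R \<le> 4 * ereal (real n ^ 2) * (l1_norm D n \<psi>)\<^sup>2 / ereal (\<kappa>\<^sup>2) / ereal (real m + 1)
             + ereal (real n ^ 2 * E)"
  proof (cases "n = 0")
    case True
    then have "R = 0" unfolding R_def residual_def by simp
    then show ?thesis using True by (simp add: power2_eq_square zero_ereal_def[symmetric])
  next
    case False
    show ?thesis
    proof (cases "Inf C = \<infinity>")
      case True
      then show ?thesis using False assms(3) unfolding l1 by (simp add: power2_eq_square)
    next
      case ni: False
      then obtain L0 where L0: "Inf C = ereal L0" "L0 \<ge> 0" using l0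
        by (cases "Inf C") auto
      have "R \<le> 4 * (real n)\<^sup>2 * L0\<^sup>2 / \<kappa>\<^sup>2 / (real m + 1) + (real n)\<^sup>2 * E"
      proof (cases "R \<le> (real n)\<^sup>2 * E")
        case True
        have "0 \<le> 4 * (real n)\<^sup>2 * L0\<^sup>2 / \<kappa>\<^sup>2 / (real m + 1)" by simp
        then show ?thesis using True by linarith
      next
        case gt: False
        define K where "K = 4 * (real n)\<^sup>2 / \<kappa>\<^sup>2 / (real m + 1)"
        have K0: "K > 0" unfolding K_def using False assms(3) by simp
        define q where "q = sqrt ((R - (real n)\<^sup>2 * E) / K)"
        have q0: "q \<ge> 0" unfolding q_def using gt K0 by simp
        have qsq: "q\<^sup>2 = (R - (real n)\<^sup>2 * E) / K" unfolding q_def using gt K0 by simp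
        have "ereal q \<le> Inf C"
        proof (rule Inf_greatest)
          fix x assume "x \<in> C"
          then obtain L where L: "x = ereal L" "L \<ge> 0" "R \<le> K * L\<^sup>2 + (real n)\<^sup>2 * E"
            using Cb unfolding K_def by (auto simp: field_simps)
          have "q\<^sup>2 \<le> L\<^sup>2" using qsq L(3) K0 by (simp add: divide_le_eq mult.commute)
          then have "q \<le> L" using L(2) by (rule power2_le_imp_le)
          then show "ereal q \<le> x" using L(1) by simp
        qed
        then have "q \<le> L0" using L0 by simp
        then have "q\<^sup>2 \<le> L0\<^sup>2" using q0 by (intro power_mono) auto
        then have "R - (real n)\<^sup>2 * E \<le> K * L0\<^sup>2" using qsq K0 by (simp add: divide_le_eq mult.commute)
        then show ?thesis unfolding K_def by (simp add: field_simps)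
      qed
      then show ?thesis using L0 assms(3) unfolding l1 by (simp add: power2_eq_square)
    qed
  qed
qed

end
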